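(* Let $n\le -1$ be an odd integer with $3\mid n$. If $n\equiv 3\pmod 4$, then $w$ does not divide $q_n$ modulo $3$. If $n\equiv 1\pmod 4$, then $w^2$ divides $q_n$ modulo $3$ but $w^3$ does not.
   Context: Define $q_n\in\mathbb{Z}[w]$ for odd $n\le -1$ by $q_{-1}=w^3-w^2+2w-7$, $q_{-3}=w^5-2w^4-2w^3+5w^2+3w-9$, $q_{-5}=w^7-2w^6-4w^5+8w^4+4w^3-7w^2+2w-7$, and $q_n=(w^2-1)(q_{n+2}-q_{n+4})+q_{n+6}$ for odd $n<-5$. Divisibility "modulo 3" refers to the reductions in $\mathbb{F}_3[w]$. *)

theory Defs
  imports "HOL-Computational_Algebra.Polynomial" "HOL-Library.Numeral_Type"
begin

text \<open>Q k is the polynomial q_n for n = -(2k+1).\<close>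
fun Q :: "nat \<Rightarrow> int poly" where
  "Q 0 = [:-7, 2, -1, 1:]"
| "Q (Suc 0) = [:-9, 3, 5, -2, -2, 1:]"
| "Q (Suc (Suc 0)) = [:-7, 2, -7, 4, 8, -4, -2, 1:]"
| "Q (Suc (Suc (Suc k))) = ([:-1, 0, 1:]) * (Q (Suc (Suc k)) - Q (Suc k)) + Q k"

text \<open>q n for odd n \<le> -1 (value irrelevant otherwise).\<close>
definition q :: "int \<Rightarrow> int poly" where
  "q n = Q (nat ((- n - 1) div 2))"

definition mod3 :: "int poly \<Rightarrow> 3 poly" where
  "mod3 p = map_poly (of_int :: int \<Rightarrow> 3) p"

end

theory Submission
  imports Defs
begin
lemma mulx: "[:-1,0,1:] * p = pCons 0 (pCons 0 p) - (p::int poly)"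
  by (simp add: algebra_simps)
lemma h1: "(-(a-b)+c) mod 3 = (-(a mod 3 - b mod 3) + c mod 3) mod (3::int)"
proof -
  have "-(a-b)+c = (-(a mod 3 - b mod 3) + c mod 3) + (-(a div 3) + b div 3 + c div 3) * 3"
    using div_mult_mod_eq[of a 3] div_mult_mod_eq[of b 3] div_mult_mod_eq[of c 3] by (simp add: algebra_simps)
  then show ?thesis by (simp only: mod_mult_self1)
qed
lemma h2: "((d-e)-(a-b)+c) mod 3 = ((d mod 3 - e mod 3)-(a mod 3 - b mod 3) + c mod 3) mod (3::int)"
proof -
  have "((d-e)-(a-b)+c) = ((d mod 3 - e mod 3)-(a mod 3 - b mod 3) + c mod 3) + (d div 3 - e div 3-(a div 3) + b div 3 + c div 3)*3"
    using div_mult_mod_eq[of a 3] div_mult_mod_eq[of b 3] div_mult_mod_eq[of c 3] div_mult_mod_eq[of d 3] div_mult_mod_eq[of e 3] by (simp add: algebra_simps)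
  then show ?thesis by (simp only: mod_mult_self1)
qed
lemma key: "coeff (Q k) 0 mod 3 = (if even k then 2 else 0) \<and> coeff (Q k) 1 mod 3 = (if even k then 2 else 0)
   \<and> coeff (Q k) 2 mod 3 = (if k mod 6 < 3 then 2 else 1)"
proof (induction k rule: Q.induct)
  case (4 k)
  let ?a = "Q (Suc (Suc k))" and ?b = "Q (Suc k)" and ?c = "Q k"
  have e0: "coeff (Q (Suc (Suc (Suc k)))) 0 = - (coeff ?a 0 - coeff ?b 0) + coeff ?c 0"
    by (simp add: mulx)
  have e1: "coeff (Q (Suc (Suc (Suc k)))) 1 = - (coeff ?a 1 - coeff ?b 1) + coeff ?c 1"
    by (simp add: mulx)
  have e2: "coeff (Q (Suc (Suc (Suc k)))) 2 = (coeff ?a 0 - coeff ?b 0) - (coeff ?a 2 - coeff ?b 2) + coeff ?c 2"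
    by (simp add: mulx numeral_2_eq_2)
  obtain m r where kr: "k = 6*m + r" "r < 6" by (metis mod_less_divisor div_mult_mod_eq mult.commute zero_less_numeral)
  have md: "Suc (6*m) mod 6 = 1" "Suc (Suc (6*m)) mod 6 = 2" "Suc (Suc (Suc (6*m))) mod 6 = 3"
     "Suc (Suc (Suc (Suc (6*m)))) mod 6 = 4" "Suc (Suc (Suc (Suc (Suc (6*m))))) mod 6 = 5"
     "Suc (Suc (Suc (Suc (Suc (Suc (6*m)))))) mod 6 = 0" "Suc (Suc (Suc (Suc (Suc (Suc (Suc (6*m))))))) mod 6 = 1"
     "Suc (Suc (Suc (Suc (Suc (Suc (Suc (Suc (6*m)))))))) mod 6 = 2" "(6*m) mod 6 = 0"
    by presburger+
  have "r = 0 \<or> r = 1 \<or> r = 2 \<or> r = 3 \<or> r = 4 \<or> r = 5" using kr(2) by auto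
  then show ?case unfolding e0 e1 e2 h1[of "coeff ?a 0"] h1[of "coeff ?a 1"] h2[of "coeff ?a 0"] using 4 kr(1)
    by (elim disjE) (simp_all add: mod_simps md del: Q.simps)
qed (auto simp: numeral_2_eq_2)
lemma three0: "(3::3) = 0" by simp
lemma ofi: "(of_int x :: 3) = of_int (x mod 3)"
proof -
  have "x = 3 * (x div 3) + x mod 3" by simp
  then have "(of_int x :: 3) = of_int (3 * (x div 3) + x mod 3)" by metis
  also have "\<dots> = (3::3) * of_int (x div 3) + of_int (x mod 3)" by (simp only: of_int_add of_int_mult of_int_numeral)
  also have "\<dots> = of_int (x mod 3)" using three0 by (simp only: mult_zero_left add_0)
  finally show ?thesis .
qed
lemma cm: "coeff (mod3 p) i = of_int (coeff p i mod 3)" unfolding mod3_def by (simp add: coeff_map_poly ofi[symmetric])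
lemma c: "[:0,1:] dvd (p::'a::comm_ring_1 poly) \<Longrightarrow> coeff p 0 = 0" by auto
lemma d: "[:0,1:]^3 dvd (p::'a::comm_ring_1 poly) \<Longrightarrow> coeff p 2 = 0" by (auto simp: numeral_3_eq_3 numeral_2_eq_2 coeff_pCons)
lemma e: "coeff p 0 = 0 \<Longrightarrow> coeff p 1 = 0 \<Longrightarrow> [:0,1:]^2 dvd (p::'a::comm_ring_1 poly)"
proof -
  assume h: "coeff p 0 = 0" "coeff p 1 = 0"
  obtain a p1 where p1: "p = pCons a p1" by (cases p)
  obtain b r where r: "p1 = pCons b r" by (cases p1)
  have "p = [:0,1:]^2 * r" using h p1 r by (simp add: power2_eq_square)
  then show ?thesis by simp
qed

theorem proposition5p1:
  fixes n :: int
  assumes "n \<le> -1" and "odd n" and "3 dvd n"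
  shows "(n mod 4 = 3 \<longrightarrow> \<not> [:0, 1:] dvd mod3 (q n))
       \<and> (n mod 4 = 1 \<longrightarrow> [:0, 1:] ^ 2 dvd mod3 (q n) \<and> \<not> [:0, 1:] ^ 3 dvd mod3 (q n))"
proof -
  define k where "k = nat ((- n - 1) div 2)"
  have qk: "q n = Q k" unfolding q_def k_def ..
  have ik: "int k = (- n - 1) div 2" unfolding k_def using assms(1) by simp
  have nj: "n = - 2 * int k - 1" using ik assms(2) by (auto elim!: oddE)
  have km: "int (k mod 6) = int k mod 6" by (simp add: of_nat_mod)
  obtain m r where kr: "k = 6*m + r" "r < 6" by (metis mod_less_divisor div_mult_mod_eq mult.commute zero_less_numeral)
  have kmr: "k mod 6 = r" using kr by simp
  have nmr: "n = (- 2 * int r - 1) + 4 * (-3 * int m)" using nj kr(1) by simp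
  have n4: "n mod 4 = (- 2 * int r - 1) mod 4" unfolding nmr by (simp only: mod_mult_self2)
  have n3: "3 dvd (- 2 * int r - 1)"
  proof -
    have "n = (- 2 * int r - 1) + 3 * (-4 * int m)" using nj kr(1) by simp
    then show ?thesis using assms(3) by (metis dvd_add_left_iff dvd_triv_left)
  qed
  have rc: "r = 0 \<or> r = 1 \<or> r = 2 \<or> r = 3 \<or> r = 4 \<or> r = 5" using kr(2) by auto
  have k4: "n mod 4 = 3 \<Longrightarrow> k mod 6 = 4" using rc n4 n3 unfolding kmr by auto
  have k1: "n mod 4 = 1 \<Longrightarrow> k mod 6 = 1" using rc n4 n3 unfolding kmr by auto
  have ev4: "k mod 6 = 4 \<Longrightarrow> even k" using kr by auto
  have od1: "k mod 6 = 1 \<Longrightarrow> odd k" using kr by auto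
  show ?thesis
  proof (intro conjI impI)
    assume "n mod 4 = 3"
    then have "coeff (Q k) 0 mod 3 = 2" using key[of k] k4 ev4 by simp
    then have "coeff (mod3 (q n)) 0 \<noteq> 0" unfolding qk cm by simp
    then show "\<not> [:0, 1:] dvd mod3 (q n)" using c by blast
  next
    assume "n mod 4 = 1"
    then have "coeff (Q k) 0 mod 3 = 0" "coeff (Q k) 1 mod 3 = 0" "coeff (Q k) 2 mod 3 = 2"
      using key[of k] k1 od1 by simp_all
    then have "coeff (mod3 (q n)) 0 = 0" "coeff (mod3 (q n)) 1 = 0" "coeff (mod3 (q n)) 2 \<noteq> 0"
      unfolding qk cm by simp_all
    then show "[:0, 1:] ^ 2 dvd mod3 (q n)" "\<not> [:0, 1:] ^ 3 dvd mod3 (q n)"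
      using e d by blast+
  qed
qed
end
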